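(* Let $G$ be a finite group, let $n\ge1$, and let $\phi,\theta\in S_n$ be such that $\theta$ is obtained from $\phi$ by an $x$--$y$ cyclic operation for some $x,y\in\{0,1,\dots,n\}$. Then \[ Pr(a_1a_2\cdots a_n=a_{\phi_1}a_{\phi_2}\cdots a_{\phi_n})=Pr(a_1a_2\cdots a_n=a_{\theta_1}a_{\theta_2}\cdots a_{\theta_n}), \] where in both cases $a_1,\dots,a_n$ are independent and uniformly random elements of $G$.
   Context: Permutations are written in one-line notation $\phi=\langle\phi_1\dots\phi_n\rangle$, with $\phi_i=\phi(i)$; set $\phi_0=0$. The big black cycle of $\phi$ is the $(n+1)$-cycle $\phi^{\cdot}$ on $\{0,1,\dots,n\}$ defined by $\phi^{\cdot}(\phi_i)=\phi_{i-1}$ for $1\le i\le n$ and $\phi^{\cdot}(0)=\phi_n$. In cycle notation, $\phi^{\cdot}=(0,\phi_n,\phi_{n-1},\dots,\phi_1)$. We write $a\to b$ when $\phi^{\cdot}(a)=b$. Every $(n+1)$-cycle $(0,c_n,\dots,c_1)$ on $\{0,\dots,n\}$ is the big black cycle of exactly one permutation, namely $\langle c_1\dots c_n\rangle$. $x$--$y$ cyclic operation: suppose $\phi^{\cdot}$ contains $x+1\to y\to x$; when $x=n$ this condition reads $0\to y\to n$. Then $\theta$ is the permutation whose big black cycle $\theta^{\cdot}$ is obtained from $\phi^{\cdot}$ by relabeling its entries as follows. (i) If $x<n$ and $y>x+1$: the entry $x+1$ is replaced by $y-1$, each entry $t$ with $x+2\le t\le y-1$ is replaced by $t-1$, and all other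 entries are unchanged. (ii) If $y<x$: the entry $x$ is replaced by $y+1$, each entry $t$ with $y+1\le t\le x-1$ is replaced by $t+1$, and all other entries are unchanged. *)

theory Defs
  imports Complex_Main "HOL-Algebra.Group" "HOL-Combinatorics.Permutations"
begin

text \<open>Permutations of {1..n} are functions nat => nat permuting {1..n}; they fix 0,
  matching the convention phi_0 = 0.\<close>

text \<open>Big black cycle of phi, as a function on {0..n}: phi_i maps to phi_(i-1), 0 maps to phi_n.\<close>
definition bbc :: "nat \<Rightarrow> (nat \<Rightarrow> nat) \<Rightarrow> nat \<Rightarrow> nat" where
  "bbc n phi a = (if a = 0 then phi n else if a \<le> n then phi (inv_into UNIV phi a - 1) else a)"

definition succ_idx :: "nat \<Rightarrow> nat \<Rightarrow> nat" where
  "succ_idx n x = (if x = n then 0 else x + 1)"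

definition relabel :: "nat \<Rightarrow> nat \<Rightarrow> nat \<Rightarrow> nat" where
  "relabel x y t =
     (if x + 1 < y then
        (if t = x + 1 then y - 1 else if x + 2 \<le> t \<and> t \<le> y - 1 then t - 1 else t)
      else if y < x then
        (if t = x then y + 1 else if y + 1 \<le> t \<and> t \<le> x - 1 then t + 1 else t)
      else t)"

text \<open>theta is obtained from phi by the x--y cyclic operation: the precondition
  x+1 -> y -> x holds in the big black cycle of phi, we are in case (i) or (ii), and the
  big black cycle of theta is the relabeled big black cycle of phi (an entry t of the cycle
  of phi becomes relabel x y t, so a -> b in phi's cycle becomes relabel a -> relabel b).\<close>
definition cyclic_op :: "nat \<Rightarrow> nat \<Rightarrow> nat \<Rightarrow> (nat \<Rightarrow> nat) \<Rightarrow> (nat \<Rightarrow> nat) \<Rightarrow> bool" where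
  "cyclic_op n x y phi theta \<longleftrightarrow>
     x \<le> n \<and> y \<le> n \<and>
     bbc n phi (succ_idx n x) = y \<and> bbc n phi y = x \<and>
     ((x < n \<and> x + 1 < y) \<or> y < x) \<and>
     (\<forall>t\<in>{0..n}. bbc n theta (relabel x y t) = relabel x y (bbc n phi t))"

definition word_prod :: "('g, 'b) monoid_scheme \<Rightarrow> nat \<Rightarrow> (nat \<Rightarrow> 'g) \<Rightarrow> 'g" where
  "word_prod G n a = foldr (\<lambda>i acc. a i \<otimes>\<^bsub>G\<^esub> acc) [1..<Suc n] \<one>\<^bsub>G\<^esub>"

definition word_prob :: "('g, 'b) monoid_scheme \<Rightarrow> nat \<Rightarrow> (nat \<Rightarrow> nat) \<Rightarrow> real" where
  "word_prob G n phi =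
     real (card {a \<in> {1..n} \<rightarrow>\<^sub>E carrier G. word_prod G n a = word_prod G n (\<lambda>i. a (phi i))})
     / real (card (carrier G)) ^ n"

end

theory Submission
  imports Defs
begin


definition lprod :: "('g,'b) monoid_scheme \<Rightarrow> (nat \<Rightarrow> 'g) \<Rightarrow> nat list \<Rightarrow> 'g" where
  "lprod G a xs = foldr (\<lambda>i acc. a i \<otimes>\<^bsub>G\<^esub> acc) xs \<one>\<^bsub>G\<^esub>"

lemma lprod_Nil[simp]: "lprod G a [] = \<one>\<^bsub>G\<^esub>" by (simp add: lprod_def)
lemma lprod_Cons[simp]: "lprod G a (i#xs) = a i \<otimes>\<^bsub>G\<^esub> lprod G a xs" by (simp add: lprod_def)
lemma lprod_cong: "(\<And>i. i \<in> set xs \<Longrightarrow> a i = b i) \<Longrightarrow> lprod G a xs = lprod G b xs"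
  by (induction xs) auto
lemma lprod_map: "lprod G a (map f xs) = lprod G (a \<circ> f) xs"
  by (induction xs) auto

context group begin

lemma lprod_closed: "(\<And>i. i \<in> set xs \<Longrightarrow> a i \<in> carrier G) \<Longrightarrow> lprod G a xs \<in> carrier G"
  by (induction xs) auto

lemma lprod_append: "(\<And>i. i \<in> set xs \<Longrightarrow> a i \<in> carrier G) \<Longrightarrow> (\<And>i. i \<in> set ys \<Longrightarrow> a i \<in> carrier G)
  \<Longrightarrow> lprod G a (xs @ ys) = lprod G a xs \<otimes> lprod G a ys"
  by (induction xs) (auto simp: m_assoc lprod_closed)

lemma inv_cancel1: "x \<in> carrier G \<Longrightarrow> y \<in> carrier G \<Longrightarrow> x \<otimes> (inv x \<otimes> y) = y"
  by (simp add: m_assoc[symmetric])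
lemma inv_cancel2: "x \<in> carrier G \<Longrightarrow> y \<in> carrier G \<Longrightarrow> inv x \<otimes> (x \<otimes> y) = y"
  by (simp add: m_assoc[symmetric])

lemma count_transfer:
  assumes "\<And>a. a \<in> K \<Longrightarrow> F a \<in> K" "\<And>a. a \<in> K \<Longrightarrow> Fi a \<in> K"
    "\<And>a. a \<in> K \<Longrightarrow> Fi (F a) = a" "\<And>a. a \<in> K \<Longrightarrow> F (Fi a) = a"
    "\<And>a. a \<in> K \<Longrightarrow> Q1 a \<longleftrightarrow> Q2 (F a)"
  shows "card {a\<in>K. Q1 a} = card {a\<in>K. Q2 a}"
proof -
  have "bij_betw F {a\<in>K. Q1 a} {a\<in>K. Q2 a}"
  proof (rule bij_betw_byWitness[where f'=Fi])
    show "F ` {a\<in>K. Q1 a} \<subseteq> {a\<in>K. Q2 a}" using assms(1,5) by auto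
    show "Fi ` {a\<in>K. Q2 a} \<subseteq> {a\<in>K. Q1 a}" using assms(2,4,5) by force
  qed (use assms(3,4) in auto)
  thus ?thesis by (rule bij_betw_same_card)
qed

lemma lprod_app: "set xs \<subseteq> {i. a i \<in> carrier G} \<Longrightarrow> set ys \<subseteq> {i. a i \<in> carrier G}
  \<Longrightarrow> lprod G a (xs @ ys) = lprod G a xs \<otimes> lprod G a ys"
  by (rule lprod_append) auto

lemma lprod_cl: "set xs \<subseteq> {i. a i \<in> carrier G} \<Longrightarrow> lprod G a xs \<in> carrier G"
  by (rule lprod_closed) auto

lemma case_ia:
  assumes d1: "distinct (A@[w,u]@B@[v]@C)" and d2: "distinct (D@[w,v,u]@E)"
    and s1: "set (A@[w,u]@B@[v]@C) \<subseteq> N" and s2: "set (D@[w,v,u]@E) \<subseteq> N"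
  shows "card {a \<in> N \<rightarrow>\<^sub>E carrier G. lprod G a (A@[w,u]@B@[v]@C) = lprod G a (D@[w,v,u]@E)}
       = card {a \<in> N \<rightarrow>\<^sub>E carrier G. lprod G a (A@[w]@B@[u,v]@C) = lprod G a (D@[w,v,u]@E)}"
proof (rule count_transfer[where F="\<lambda>a. a(w := a w \<otimes> a u, v := inv (a u) \<otimes> a v)"
     and Fi = "\<lambda>a. a(w := a w \<otimes> inv (a u), v := a u \<otimes> a v)"])
  have N: "u \<in> N" "v \<in> N" "w \<in> N" using s1 by auto
  have ne: "u \<noteq> v" "u \<noteq> w" "v \<noteq> w" using d1 by auto
  fix a assume a: "a \<in> N \<rightarrow>\<^sub>E carrier G"
  hence ca: "\<And>i. i \<in> N \<Longrightarrow> a i \<in> carrier G" by auto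
  show "a(w := a w \<otimes> a u, v := inv (a u) \<otimes> a v) \<in> N \<rightarrow>\<^sub>E carrier G"
    using a N ne by (auto simp: PiE_iff extensional_def)
  show "a(w := a w \<otimes> inv (a u), v := a u \<otimes> a v) \<in> N \<rightarrow>\<^sub>E carrier G"
    using a N ne by (auto simp: PiE_iff extensional_def)
  show "(\<lambda>a. a(w := a w \<otimes> inv (a u), v := a u \<otimes> a v)) (a(w := a w \<otimes> a u, v := inv (a u) \<otimes> a v)) = a"
    using ne ca[OF N(1)] ca[OF N(2)] ca[OF N(3)] by (auto simp: m_assoc inv_cancel1)
  show "(\<lambda>a. a(w := a w \<otimes> a u, v := inv (a u) \<otimes> a v)) (a(w := a w \<otimes> inv (a u), v := a u \<otimes> a v)) = a"
    using ne ca[OF N(1)] ca[OF N(2)] ca[OF N(3)] by (auto simp: m_assoc inv_cancel2)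
  define b where "b = a(w := a w \<otimes> a u, v := inv (a u) \<otimes> a v)"
  have cb: "\<And>i. i \<in> N \<Longrightarrow> b i \<in> carrier G" using ca N unfolding b_def by auto
  have eq: "lprod G b X = lprod G a X" if "set X \<subseteq> set A \<union> set B \<union> set C \<union> set D \<union> set E" for X
    by (rule lprod_cong) (use that d1 d2 in \<open>auto simp: b_def\<close>)
  have sa: "set X \<subseteq> {i. a i \<in> carrier G}" "set X \<subseteq> {i. b i \<in> carrier G}" if "set X \<subseteq> N" for X
    using that ca cb by auto
  have eqs: "lprod G b A = lprod G a A" "lprod G b B = lprod G a B" "lprod G b C = lprod G a C"
     "lprod G b D = lprod G a D" "lprod G b E = lprod G a E" by (rule eq; auto)+
  have bv: "b w = a w \<otimes> a u" "b u = a u" "b v = inv (a u) \<otimes> a v" using ne by (auto simp: b_def)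
  have sub: "set A \<subseteq> N" "set B \<subseteq> N" "set C \<subseteq> N" "set D \<subseteq> N" "set E \<subseteq> N" using s1 s2 by auto
  note cl = lprod_cl[OF sa(1)[OF sub(1)]] lprod_cl[OF sa(1)[OF sub(2)]] lprod_cl[OF sa(1)[OF sub(3)]]
     lprod_cl[OF sa(1)[OF sub(4)]] lprod_cl[OF sa(1)[OF sub(5)]] ca[OF N(1)] ca[OF N(2)] ca[OF N(3)]
  have "lprod G b (A@[w]@B@[u,v]@C) = lprod G a (A@[w,u]@B@[v]@C)"
    using sa[OF sub(1)] sa[OF sub(2)] sa[OF sub(3)] ca[OF N(1)] ca[OF N(2)] ca[OF N(3)] cb[OF N(1)] cb[OF N(2)] cb[OF N(3)] ne
    by (simp add: lprod_app eqs cl m_assoc inv_cancel1 bv)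
  moreover have "lprod G b (D@[w,v,u]@E) = lprod G a (D@[w,v,u]@E)"
    using sa[OF sub(4)] sa[OF sub(5)] ca[OF N(1)] ca[OF N(2)] ca[OF N(3)] cb[OF N(1)] cb[OF N(2)] cb[OF N(3)] ne
    by (simp add: lprod_app eqs cl m_assoc inv_cancel1 bv)
  ultimately show "(lprod G a (A@[w,u]@B@[v]@C) = lprod G a (D@[w,v,u]@E)) =
     (lprod G (a(w := a w \<otimes> a u, v := inv (a u) \<otimes> a v)) (A@[w]@B@[u,v]@C) = lprod G (a(w := a w \<otimes> a u, v := inv (a u) \<otimes> a v)) (D@[w,v,u]@E))"
    unfolding b_def by simp
qed

lemma case_ib:
  assumes d1: "distinct ([u]@B@[v]@C)" and d2: "distinct ([v,u]@E)"
    and s1: "set ([u]@B@[v]@C) \<subseteq> N" and s2: "set ([v,u]@E) \<subseteq> N"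
  shows "card {a \<in> N \<rightarrow>\<^sub>E carrier G. lprod G a ([u]@B@[v]@C) = lprod G a ([v,u]@E)}
       = card {a \<in> N \<rightarrow>\<^sub>E carrier G. lprod G a (B@[u,v]@C) = lprod G a ([v,u]@E)}"
proof (rule count_transfer[where F="\<lambda>a. a(v := inv (a u) \<otimes> a v)"
     and Fi = "\<lambda>a. a(v := a u \<otimes> a v)"])
  have N: "u \<in> N" "v \<in> N" using s1 by auto
  have ne: "u \<noteq> v" using d1 by auto
  fix a assume a: "a \<in> N \<rightarrow>\<^sub>E carrier G"
  hence ca: "\<And>i. i \<in> N \<Longrightarrow> a i \<in> carrier G" by auto
  show "a(v := inv (a u) \<otimes> a v) \<in> N \<rightarrow>\<^sub>E carrier G"
    using a N ne by (auto simp: PiE_iff extensional_def)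
  show "a(v := a u \<otimes> a v) \<in> N \<rightarrow>\<^sub>E carrier G"
    using a N ne by (auto simp: PiE_iff extensional_def)
  show "(\<lambda>a. a(v := a u \<otimes> a v)) (a(v := inv (a u) \<otimes> a v)) = a"
    using ne ca[OF N(1)] ca[OF N(2)] by (auto simp: m_assoc inv_cancel1)
  show "(\<lambda>a. a(v := inv (a u) \<otimes> a v)) (a(v := a u \<otimes> a v)) = a"
    using ne ca[OF N(1)] ca[OF N(2)] by (auto simp: m_assoc inv_cancel2)
  define b where "b = a(v := inv (a u) \<otimes> a v)"
  have cb: "\<And>i. i \<in> N \<Longrightarrow> b i \<in> carrier G" using ca N unfolding b_def by auto
  have eq: "lprod G b X = lprod G a X" if "set X \<subseteq> set B \<union> set C \<union> set E" for X
    by (rule lprod_cong) (use that d1 d2 in \<open>auto simp: b_def\<close>)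
  have sa: "set X \<subseteq> {i. a i \<in> carrier G}" "set X \<subseteq> {i. b i \<in> carrier G}" if "set X \<subseteq> N" for X
    using that ca cb by auto
  have eqs: "lprod G b B = lprod G a B" "lprod G b C = lprod G a C"
     "lprod G b E = lprod G a E" by (rule eq; auto)+
  have bv: "b u = a u" "b v = inv (a u) \<otimes> a v" using ne by (auto simp: b_def)
  have sub: "set B \<subseteq> N" "set C \<subseteq> N" "set E \<subseteq> N" using s1 s2 by auto
  note cl = lprod_cl[OF sa(1)[OF sub(1)]] lprod_cl[OF sa(1)[OF sub(2)]] lprod_cl[OF sa(1)[OF sub(3)]]
     ca[OF N(1)] ca[OF N(2)]
  have e1: "lprod G a ([u]@B@[v]@C) = a u \<otimes> lprod G b (B@[u,v]@C)"
    using sa[OF sub(1)] sa[OF sub(2)] cb[OF N(1)] cb[OF N(2)] ne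
    by (simp add: lprod_app eqs cl m_assoc inv_cancel1 bv)
  have e2: "lprod G a ([v,u]@E) = a u \<otimes> lprod G b ([v,u]@E)"
    using sa[OF sub(3)] cb[OF N(1)] cb[OF N(2)] ne
    by (simp add: lprod_app eqs cl m_assoc inv_cancel1 bv)
  have c3: "lprod G b (B@[u,v]@C) \<in> carrier G" "lprod G b ([v,u]@E) \<in> carrier G"
    by (rule lprod_closed; use cb N sub in auto)+
  show "(lprod G a ([u]@B@[v]@C) = lprod G a ([v,u]@E)) =
     (lprod G (a(v := inv (a u) \<otimes> a v)) (B@[u,v]@C) = lprod G (a(v := inv (a u) \<otimes> a v)) ([v,u]@E))"
    unfolding e1 e2 b_def[symmetric] using c3 cl by simp
qed

lemma case_iia:
  assumes d1: "distinct (A@[v]@B@[w,z]@C)" and d2: "distinct (D@[w,v,z]@E)"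
    and s1: "set (A@[v]@B@[w,z]@C) \<subseteq> N" and s2: "set (D@[w,v,z]@E) \<subseteq> N"
  shows "card {a \<in> N \<rightarrow>\<^sub>E carrier G. lprod G a (A@[v]@B@[w,z]@C) = lprod G a (D@[w,v,z]@E)}
       = card {a \<in> N \<rightarrow>\<^sub>E carrier G. lprod G a (A@[v,w]@B@[z]@C) = lprod G a (D@[w,v,z]@E)}"
proof (rule count_transfer[where F="\<lambda>a. a(v := a v \<otimes> inv (a w), z := a w \<otimes> a z)"
     and Fi = "\<lambda>a. a(v := a v \<otimes> a w, z := inv (a w) \<otimes> a z)"])
  have N: "z \<in> N" "v \<in> N" "w \<in> N" using s1 by auto
  have ne: "z \<noteq> v" "z \<noteq> w" "v \<noteq> w" using d1 by auto
  fix a assume a: "a \<in> N \<rightarrow>\<^sub>E carrier G"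
  hence ca: "\<And>i. i \<in> N \<Longrightarrow> a i \<in> carrier G" by auto
  show "a(v := a v \<otimes> inv (a w), z := a w \<otimes> a z) \<in> N \<rightarrow>\<^sub>E carrier G"
    using a N ne by (auto simp: PiE_iff extensional_def)
  show "a(v := a v \<otimes> a w, z := inv (a w) \<otimes> a z) \<in> N \<rightarrow>\<^sub>E carrier G"
    using a N ne by (auto simp: PiE_iff extensional_def)
  show "(\<lambda>a. a(v := a v \<otimes> a w, z := inv (a w) \<otimes> a z)) (a(v := a v \<otimes> inv (a w), z := a w \<otimes> a z)) = a"
    using ne ca[OF N(1)] ca[OF N(2)] ca[OF N(3)] by (auto simp: m_assoc inv_cancel2)
  show "(\<lambda>a. a(v := a v \<otimes> inv (a w), z := a w \<otimes> a z)) (a(v := a v \<otimes> a w, z := inv (a w) \<otimes> a z)) = a"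
    using ne ca[OF N(1)] ca[OF N(2)] ca[OF N(3)] by (auto simp: m_assoc inv_cancel1)
  define b where "b = a(v := a v \<otimes> inv (a w), z := a w \<otimes> a z)"
  have cb: "\<And>i. i \<in> N \<Longrightarrow> b i \<in> carrier G" using ca N unfolding b_def by auto
  have eq: "lprod G b X = lprod G a X" if "set X \<subseteq> set A \<union> set B \<union> set C \<union> set D \<union> set E" for X
    by (rule lprod_cong) (use that d1 d2 in \<open>auto simp: b_def\<close>)
  have sa: "set X \<subseteq> {i. a i \<in> carrier G}" "set X \<subseteq> {i. b i \<in> carrier G}" if "set X \<subseteq> N" for X
    using that ca cb by auto
  have eqs: "lprod G b A = lprod G a A" "lprod G b B = lprod G a B" "lprod G b C = lprod G a C"
     "lprod G b D = lprod G a D" "lprod G b E = lprod G a E" by (rule eq; auto)+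
  have bv: "b w = a w" "b z = a w \<otimes> a z" "b v = a v \<otimes> inv (a w)" using ne by (auto simp: b_def)
  have sub: "set A \<subseteq> N" "set B \<subseteq> N" "set C \<subseteq> N" "set D \<subseteq> N" "set E \<subseteq> N" using s1 s2 by auto
  note cl = lprod_cl[OF sa(1)[OF sub(1)]] lprod_cl[OF sa(1)[OF sub(2)]] lprod_cl[OF sa(1)[OF sub(3)]]
     lprod_cl[OF sa(1)[OF sub(4)]] lprod_cl[OF sa(1)[OF sub(5)]] ca[OF N(1)] ca[OF N(2)] ca[OF N(3)]
  have "lprod G b (A@[v,w]@B@[z]@C) = lprod G a (A@[v]@B@[w,z]@C)"
    using sa[OF sub(1)] sa[OF sub(2)] sa[OF sub(3)] cb[OF N(1)] cb[OF N(2)] cb[OF N(3)] ne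
    by (simp add: lprod_app eqs cl m_assoc inv_cancel2 bv)
  moreover have "lprod G b (D@[w,v,z]@E) = lprod G a (D@[w,v,z]@E)"
    using sa[OF sub(4)] sa[OF sub(5)] cb[OF N(1)] cb[OF N(2)] cb[OF N(3)] ne
    by (simp add: lprod_app eqs cl m_assoc inv_cancel2 bv)
  ultimately show "(lprod G a (A@[v]@B@[w,z]@C) = lprod G a (D@[w,v,z]@E)) =
     (lprod G (a(v := a v \<otimes> inv (a w), z := a w \<otimes> a z)) (A@[v,w]@B@[z]@C) = lprod G (a(v := a v \<otimes> inv (a w), z := a w \<otimes> a z)) (D@[w,v,z]@E))"
    unfolding b_def by simp
qed

lemma case_iib:
  assumes d1: "distinct (A@[v]@B@[w])" and d2: "distinct (D@[w,v])"
    and s1: "set (A@[v]@B@[w]) \<subseteq> N" and s2: "set (D@[w,v]) \<subseteq> N"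
  shows "card {a \<in> N \<rightarrow>\<^sub>E carrier G. lprod G a (A@[v]@B@[w]) = lprod G a (D@[w,v])}
       = card {a \<in> N \<rightarrow>\<^sub>E carrier G. lprod G a (A@[v,w]@B) = lprod G a (D@[w,v])}"
proof (rule count_transfer[where F="\<lambda>a. a(v := a v \<otimes> inv (a w))"
     and Fi = "\<lambda>a. a(v := a v \<otimes> a w)"])
  have N: "v \<in> N" "w \<in> N" using s1 by auto
  have ne: "v \<noteq> w" using d1 by auto
  fix a assume a: "a \<in> N \<rightarrow>\<^sub>E carrier G"
  hence ca: "\<And>i. i \<in> N \<Longrightarrow> a i \<in> carrier G" by auto
  show "a(v := a v \<otimes> inv (a w)) \<in> N \<rightarrow>\<^sub>E carrier G"
    using a N ne by (auto simp: PiE_iff extensional_def)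
  show "a(v := a v \<otimes> a w) \<in> N \<rightarrow>\<^sub>E carrier G"
    using a N ne by (auto simp: PiE_iff extensional_def)
  show "(\<lambda>a. a(v := a v \<otimes> a w)) (a(v := a v \<otimes> inv (a w))) = a"
    using ne ca[OF N(1)] ca[OF N(2)] by (auto simp: m_assoc)
  show "(\<lambda>a. a(v := a v \<otimes> inv (a w))) (a(v := a v \<otimes> a w)) = a"
    using ne ca[OF N(1)] ca[OF N(2)] by (auto simp: m_assoc)
  define b where "b = a(v := a v \<otimes> inv (a w))"
  have cb: "\<And>i. i \<in> N \<Longrightarrow> b i \<in> carrier G" using ca N unfolding b_def by auto
  have eq: "lprod G b X = lprod G a X" if "set X \<subseteq> set A \<union> set B \<union> set D" for X
    by (rule lprod_cong) (use that d1 d2 in \<open>auto simp: b_def\<close>)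
  have sa: "set X \<subseteq> {i. a i \<in> carrier G}" "set X \<subseteq> {i. b i \<in> carrier G}" if "set X \<subseteq> N" for X
    using that ca cb by auto
  have eqs: "lprod G b A = lprod G a A" "lprod G b B = lprod G a B"
     "lprod G b D = lprod G a D" by (rule eq; auto)+
  have bv: "b w = a w" "b v = a v \<otimes> inv (a w)" using ne by (auto simp: b_def)
  have sub: "set A \<subseteq> N" "set B \<subseteq> N" "set D \<subseteq> N" using s1 s2 by auto
  note cl = lprod_cl[OF sa(1)[OF sub(1)]] lprod_cl[OF sa(1)[OF sub(2)]] lprod_cl[OF sa(1)[OF sub(3)]]
     ca[OF N(1)] ca[OF N(2)]
  have e1: "lprod G a (A@[v]@B@[w]) = lprod G b (A@[v,w]@B) \<otimes> a w"
    using sa[OF sub(1)] sa[OF sub(2)] cb[OF N(1)] cb[OF N(2)] ne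
    by (simp add: lprod_app eqs cl m_assoc bv inv_cancel2)
  have e2: "lprod G a (D@[w,v]) = lprod G b (D@[w,v]) \<otimes> a w"
    using sa[OF sub(3)] cb[OF N(1)] cb[OF N(2)] ne
    by (simp add: lprod_app eqs cl m_assoc bv)
  have c3: "lprod G b (A@[v,w]@B) \<in> carrier G" "lprod G b (D@[w,v]) \<in> carrier G"
    by (rule lprod_closed; use cb N sub in auto)+
  show "(lprod G a (A@[v]@B@[w]) = lprod G a (D@[w,v])) =
     (lprod G (a(v := a v \<otimes> inv (a w))) (A@[v,w]@B) = lprod G (a(v := a v \<otimes> inv (a w))) (D@[w,v]))"
    unfolding e1 e2 b_def[symmetric] using c3 cl by simp
qed

lemma case_iic:
  assumes d1: "distinct (B@[w,z]@C)" and d2: "distinct ([z]@M@[w])"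
    and s1: "set (B@[w,z]@C) \<subseteq> N" and s2: "set ([z]@M@[w]) \<subseteq> N"
  shows "card {a \<in> N \<rightarrow>\<^sub>E carrier G. lprod G a (B@[w,z]@C) = lprod G a ([z]@M@[w])}
       = card {a \<in> N \<rightarrow>\<^sub>E carrier G. lprod G a ([w]@B@[z]@C) = lprod G a ([z]@M@[w])}"
proof (rule count_transfer[where F="\<lambda>a. a(z := a w \<otimes> a z)"
     and Fi = "\<lambda>a. a(z := inv (a w) \<otimes> a z)"])
  have N: "z \<in> N" "w \<in> N" using s1 by auto
  have ne: "z \<noteq> w" using d1 by auto
  fix a assume a: "a \<in> N \<rightarrow>\<^sub>E carrier G"
  hence ca: "\<And>i. i \<in> N \<Longrightarrow> a i \<in> carrier G" by auto
  show "a(z := a w \<otimes> a z) \<in> N \<rightarrow>\<^sub>E carrier G"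
    using a N ne by (auto simp: PiE_iff extensional_def)
  show "a(z := inv (a w) \<otimes> a z) \<in> N \<rightarrow>\<^sub>E carrier G"
    using a N ne by (auto simp: PiE_iff extensional_def)
  show "(\<lambda>a. a(z := inv (a w) \<otimes> a z)) (a(z := a w \<otimes> a z)) = a"
    using ne ca[OF N(1)] ca[OF N(2)] by (auto simp: m_assoc inv_cancel2)
  show "(\<lambda>a. a(z := a w \<otimes> a z)) (a(z := inv (a w) \<otimes> a z)) = a"
    using ne ca[OF N(1)] ca[OF N(2)] by (auto simp: m_assoc inv_cancel1)
  define b where "b = a(z := a w \<otimes> a z)"
  have cb: "\<And>i. i \<in> N \<Longrightarrow> b i \<in> carrier G" using ca N unfolding b_def by auto
  have eq: "lprod G b X = lprod G a X" if "set X \<subseteq> set B \<union> set C \<union> set M" for X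
    by (rule lprod_cong) (use that d1 d2 in \<open>auto simp: b_def\<close>)
  have sa: "set X \<subseteq> {i. a i \<in> carrier G}" "set X \<subseteq> {i. b i \<in> carrier G}" if "set X \<subseteq> N" for X
    using that ca cb by auto
  have eqs: "lprod G b B = lprod G a B" "lprod G b C = lprod G a C"
     "lprod G b M = lprod G a M" by (rule eq; auto)+
  have bv: "b w = a w" "b z = a w \<otimes> a z" using ne by (auto simp: b_def)
  have sub: "set B \<subseteq> N" "set C \<subseteq> N" "set M \<subseteq> N" using s1 s2 by auto
  note cl = lprod_cl[OF sa(1)[OF sub(1)]] lprod_cl[OF sa(1)[OF sub(2)]] lprod_cl[OF sa(1)[OF sub(3)]]
     ca[OF N(1)] ca[OF N(2)]
  have e1: "lprod G b ([w]@B@[z]@C) = a w \<otimes> lprod G a (B@[w,z]@C)"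
    using sa[OF sub(1)] sa[OF sub(2)] cb[OF N(1)] cb[OF N(2)] ne
    by (simp add: lprod_app eqs cl m_assoc bv)
  have e2: "lprod G b ([z]@M@[w]) = a w \<otimes> lprod G a ([z]@M@[w])"
    using sa[OF sub(3)] cb[OF N(1)] cb[OF N(2)] ne
    by (simp add: lprod_app eqs cl m_assoc bv)
  have c3: "lprod G a (B@[w,z]@C) \<in> carrier G" "lprod G a ([z]@M@[w]) \<in> carrier G"
    by (rule lprod_closed; use ca N sub in auto)+
  show "(lprod G a (B@[w,z]@C) = lprod G a ([z]@M@[w])) =
     (lprod G (a(z := a w \<otimes> a z)) ([w]@B@[z]@C) = lprod G (a(z := a w \<otimes> a z)) ([z]@M@[w]))"
    unfolding e1 e2 b_def[symmetric] using c3 cl by simp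
qed

end


lemma perm_0: "\<phi> permutes {1..(n::nat)} \<Longrightarrow> \<phi> 0 = 0"
  by (rule permutes_not_in) auto
lemma perm_in: "\<phi> permutes {1..(n::nat)} \<Longrightarrow> i \<in> {1..(n::nat)} \<Longrightarrow> \<phi> i \<in> {1..(n::nat)}"
  by (rule permutes_in_image[THEN iffD2])
lemma perm_zero_iff: "\<phi> permutes {1..(n::nat)} \<Longrightarrow> \<phi> k = 0 \<longleftrightarrow> k = 0"
  by (metis perm_0 permutes_inj injD)
lemma perm_surj: "\<phi> permutes {1..(n::nat)} \<Longrightarrow> t \<in> {1..(n::nat)} \<Longrightarrow> \<exists>i\<in>{1..(n::nat)}. \<phi> i = t"
  by (metis permutes_image image_iff)
lemma bbc_at: "\<phi> permutes {1..(n::nat)} \<Longrightarrow> 1 \<le> i \<Longrightarrow> i \<le> n \<Longrightarrow> bbc n \<phi> (\<phi> i) = \<phi> (i - 1)"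
proof -
  assume p: "\<phi> permutes {1..(n::nat)}" "1 \<le> i" "i \<le> n"
  have "\<phi> i \<in> {1..(n::nat)}" by (rule perm_in[OF p(1)]) (use p in auto)
  moreover have "inv_into UNIV \<phi> (\<phi> i) = i" using permutes_inj[OF p(1)] by (simp add: inv_into_f_f)
  ultimately show ?thesis by (simp add: bbc_def)
qed
lemma bbc_0: "bbc n \<phi> 0 = \<phi> n" by (simp add: bbc_def)

lemma theta_eq:
  assumes th: "\<theta> permutes {1..(n::nat)}" and ph: "\<phi> permutes {1..(n::nat)}" and r0: "r 0 = 0"
    and h: "\<forall>t\<in>{0..n}. bbc n \<theta> (r t) = r (bbc n \<phi> t)"
  shows "\<forall>i\<in>{1..(n::nat)}. \<theta> i = r (\<phi> i)"
proof -
  have "\<forall>k. k \<le> n \<longrightarrow> \<theta> (n - k) = r (\<phi> (n - k))"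
  proof (intro allI)
    fix k show "k \<le> n \<longrightarrow> \<theta> (n - k) = r (\<phi> (n - k))"
    proof (induction k)
      case 0
      have "\<theta> n = bbc n \<theta> (r 0)" by (simp add: r0 bbc_0)
      also have "\<dots> = r (\<phi> n)" using h by (simp add: bbc_0)
      finally show ?case by simp
    next
      case (Suc k)
      show ?case
      proof
        assume k: "Suc k \<le> n"
        define j where "j = n - k"
        have j: "1 \<le> j" "j \<le> n" "n - Suc k = j - 1" using k by (auto simp: j_def)
        have "\<theta> (j - 1) = bbc n \<theta> (\<theta> j)" using bbc_at[OF th j(1,2)] by simp
        also have "\<theta> j = r (\<phi> j)" using Suc k by (simp add: j_def)
        also have "bbc n \<theta> (r (\<phi> j)) = r (bbc n \<phi> (\<phi> j))"
          using h perm_in[OF ph, of j] j by auto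
        also have "\<dots> = r (\<phi> (j - 1))" using bbc_at[OF ph j(1,2)] by simp
        finally show "\<theta> (n - Suc k) = r (\<phi> (n - Suc k))" using j by simp
      qed
    qed
  qed
  show ?thesis proof
    fix i assume "i \<in> {1..(n::nat)}" hence "i = n - (n - i)" "n - i \<le> n" by auto
    thus "\<theta> i = r (\<phi> i)" using \<open>\<forall>k. _\<close> by metis
  qed
qed

lemma upt_split: "i \<le> j \<Longrightarrow> j < k \<Longrightarrow> [i..<k] = [i..<j] @ j # [Suc j..<k]"
  using upt_add_eq_append[of i j "k-j"] upt_conv_Cons[of j k] by simp

lemma map_split3: "3 \<le> i \<Longrightarrow> i \<le> n \<Longrightarrow>
  map f [1..<Suc n] = map f [1..<i-2] @ [f (i-2), f (i-1), f i] @ map f [i+1..<Suc n]"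
proof -
  assume i: "3 \<le> i" "i \<le> n"
  have "[1..<Suc n] = [1..<i-2] @ (i-2) # (i-1) # i # [i+1..<Suc n]"
  proof -
    have "[1..<Suc n] = [1..<i-2] @ (i-2) # [Suc (i-2)..<Suc n]" using i by (intro upt_split) auto
    moreover have "Suc (i-2) = i - 1" "Suc (i-1) = i" using i by auto
    moreover have "[i-1..<Suc n] = (i-1) # i # [i+1..<Suc n]" using i
      by (simp add: upt_conv_Cons \<open>Suc (i-1) = i\<close>)
    ultimately show ?thesis by simp
  qed
  thus ?thesis by simp
qed

lemma distinct_T: "\<phi> permutes {1..(n::nat)} \<Longrightarrow> distinct (map \<phi> [1..<Suc n])"
  by (metis distinct_map distinct_upt inj_on_subset permutes_inj subset_UNIV)
lemma set_T: "\<phi> permutes {1..(n::nat)} \<Longrightarrow> set (map \<phi> [1..<Suc n]) \<subseteq> {1..(n::nat)}"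
proof
  fix t assume p: "\<phi> permutes {1..(n::nat)}" and "t \<in> set (map \<phi> [1..<Suc n])"
  then obtain i where "i \<in> {1..(n::nat)}" "t = \<phi> i" by fastforce
  thus "t \<in> {1..(n::nat)}" using perm_in[OF p] by simp
qed



context group begin

lemma reduce_theta:
  assumes r: "bij_betw r N N" and s1: "set S' \<subseteq> N" and s2: "set T \<subseteq> N"
  shows "card {a \<in> N \<rightarrow>\<^sub>E carrier G. lprod G a (map r S') = lprod G a (map r T)}
       = card {a \<in> N \<rightarrow>\<^sub>E carrier G. lprod G a S' = lprod G a T}"
proof (rule count_transfer[where F="\<lambda>a. restrict (a \<circ> r) N" and Fi="\<lambda>a. restrict (a \<circ> inv_into N r) N"])
  have ri: "bij_betw (inv_into N r) N N" using r by (rule bij_betw_inv_into)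
  fix a assume a: "a \<in> N \<rightarrow>\<^sub>E carrier G"
  show "restrict (a \<circ> r) N \<in> N \<rightarrow>\<^sub>E carrier G"
    using a bij_betwE[OF r] by auto
  show "restrict (a \<circ> inv_into N r) N \<in> N \<rightarrow>\<^sub>E carrier G"
    using a bij_betwE[OF ri] by auto
  show "restrict (restrict (a \<circ> r) N \<circ> inv_into N r) N = a"
  proof
    fix i show "restrict (restrict (a \<circ> r) N \<circ> inv_into N r) N i = a i"
    proof (cases "i \<in> N")
      case True
      have "inv_into N r i \<in> N" using bij_betwE[OF ri] True by auto
      moreover have "r (inv_into N r i) = i" using True r
        by (metis bij_betw_imp_surj_on f_inv_into_f)
      ultimately show ?thesis using True by simp
    next
      case False thus ?thesis using a by (auto simp: PiE_def extensional_def)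
    qed
  qed
  show "restrict (restrict (a \<circ> inv_into N r) N \<circ> r) N = a"
  proof
    fix i show "restrict (restrict (a \<circ> inv_into N r) N \<circ> r) N i = a i"
    proof (cases "i \<in> N")
      case True
      have "r i \<in> N" using bij_betwE[OF r] True by auto
      moreover have "inv_into N r (r i) = i" using True r
        by (metis bij_betw_imp_inj_on inv_into_f_f)
      ultimately show ?thesis using True by simp
    next
      case False thus ?thesis using a by (auto simp: PiE_def extensional_def)
    qed
  qed
  have e: "lprod G a (map r X) = lprod G (restrict (a \<circ> r) N) X" if "set X \<subseteq> N" for X
    unfolding lprod_map by (rule lprod_cong) (use that in auto)
  show "(lprod G a (map r S') = lprod G a (map r T)) =
        (lprod G (restrict (a \<circ> r) N) S' = lprod G (restrict (a \<circ> r) N) T)"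
    using e[OF s1] e[OF s2] by simp
qed

lemma assemble:
  assumes S: "S = [1..<Suc n]" and rS: "map r S' = [1..<Suc n]" and sS: "set S' = set S"
    and T: "T = map \<phi> [1..<Suc n]" and th: "\<forall>i\<in>{1..n}. \<theta> i = r (\<phi> i)"
    and ph: "\<phi> permutes {1..n}"
    and c: "card {a \<in> {1..n} \<rightarrow>\<^sub>E carrier G. lprod G a S = lprod G a T}
          = card {a \<in> {1..n} \<rightarrow>\<^sub>E carrier G. lprod G a S' = lprod G a T}"
  shows "card {a \<in> {1..n} \<rightarrow>\<^sub>E carrier G. lprod G a [1..<Suc n] = lprod G a (map \<phi> [1..<Suc n])}
       = card {a \<in> {1..n} \<rightarrow>\<^sub>E carrier G. lprod G a [1..<Suc n] = lprod G a (map \<theta> [1..<Suc n])}"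
proof -
  have sS': "set S' = {1..n}" using sS S by auto
  have "set (map r S') = {1..n}" unfolding rS by auto
  hence img: "r ` {1..n} = {1..n}" using sS' by simp
  have "inj_on r {1..n}" by (rule eq_card_imp_inj_on) (simp_all only: img, simp)
  hence r: "bij_betw r {1..n} {1..n}" using img by (simp add: bij_betw_def)
  have mt: "map \<theta> [1..<Suc n] = map r T" using th T by auto
  have "card {a \<in> {1..n} \<rightarrow>\<^sub>E carrier G. lprod G a [1..<Suc n] = lprod G a (map \<theta> [1..<Suc n])}
      = card {a \<in> {1..n} \<rightarrow>\<^sub>E carrier G. lprod G a (map r S') = lprod G a (map r T)}"
    using rS mt by simp
  also have "\<dots> = card {a \<in> {1..n} \<rightarrow>\<^sub>E carrier G. lprod G a S' = lprod G a T}"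
    by (rule reduce_theta[OF r]) (use sS' T set_T[OF ph] in auto)
  finally show ?thesis using c S T by simp
qed

end


lemma upt_cons_back: "j < k \<Longrightarrow> j # [Suc j..<k] = [j..<k]"
  by (simp add: upt_conv_Cons)
lemma upt_app1: "i \<le> j \<Longrightarrow> j \<le> k \<Longrightarrow> [i..<j] @ [j..<k] = [i..<k]"
  by (metis le_add_diff_inverse upt_add_eq_append)
lemma upt_app2: "i \<le> j \<Longrightarrow> j \<le> k \<Longrightarrow> [i..<j] @ [j..<k] @ zs = [i..<k] @ zs"
  by (simp add: upt_app1 flip: append_assoc)
lemma upt_snoc_back: "i \<le> j \<Longrightarrow> [i..<j] @ [j] = [i..<Suc j]" by simp
lemma upt_snoc_back2: "i \<le> j \<Longrightarrow> [i..<j] @ j # zs = [i..<Suc j] @ zs" by simp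
lemmas upt_rules = upt_cons_back upt_app1 upt_app2 upt_snoc_back

lemma map_shift_down: "(\<And>t. Suc p \<le> t \<Longrightarrow> t < Suc q \<Longrightarrow> f t = t - 1) \<Longrightarrow> map f [Suc p..<Suc q] = [p..<q]"
proof -
  assume h: "\<And>t. Suc p \<le> t \<Longrightarrow> t < Suc q \<Longrightarrow> f t = t - 1"
  have "map f [Suc p..<Suc q] = map f (map Suc [p..<q])" by (simp add: map_Suc_upt)
  also have "\<dots> = [p..<q]" by (simp, rule map_idI) (auto simp: h)
  finally show ?thesis .
qed
lemma map_shift_up: "(\<And>t. p \<le> t \<Longrightarrow> t < q \<Longrightarrow> f t = Suc t) \<Longrightarrow> map f [p..<q] = [Suc p..<Suc q]"
proof -
  assume h: "\<And>t. p \<le> t \<Longrightarrow> t < q \<Longrightarrow> f t = Suc t"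
  have "map f [p..<q] = map Suc [p..<q]" by (rule map_cong) (auto simp: h)
  thus ?thesis by (simp add: map_Suc_upt)
qed
lemma map_fix: "(\<And>t. p \<le> t \<Longrightarrow> t < q \<Longrightarrow> f t = t) \<Longrightarrow> map f [p..<q] = [p..<q]"
  by (rule map_idI) auto

lemma main_ia:
  assumes grp: "group G" and ph: "\<phi> permutes {1..n}" and th: "\<theta> permutes {1..n}"
    and x: "1 \<le> x" "Suc x < y" "y \<le> n" and cop: "cyclic_op n x y \<phi> \<theta>"
  shows "card {a \<in> {1..n} \<rightarrow>\<^sub>E carrier G. lprod G a [1..<Suc n] = lprod G a (map \<phi> [1..<Suc n])}
       = card {a \<in> {1..n} \<rightarrow>\<^sub>E carrier G. lprod G a [1..<Suc n] = lprod G a (map \<theta> [1..<Suc n])}"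
proof -
  let ?r = "relabel x y"
  have hb: "\<forall>t\<in>{0..n}. bbc n \<theta> (?r t) = ?r (bbc n \<phi> t)" and h1: "bbc n \<phi> (Suc x) = y"
    and h2: "bbc n \<phi> y = x"
    using cop x by (auto simp: cyclic_op_def succ_idx_def)
  have r0: "?r 0 = 0" using x by (simp add: relabel_def)
  have tr: "\<forall>i\<in>{1..n}. \<theta> i = ?r (\<phi> i)" by (rule theta_eq[OF th ph r0 hb])
  obtain i where i: "i \<in> {1..n}" "\<phi> i = Suc x" using perm_surj[OF ph, of "Suc x"] x by auto
  have p1: "\<phi> (i - 1) = y" using h1 bbc_at[OF ph, of i] i by auto
  have i2: "i \<ge> 2" using p1 perm_zero_iff[OF ph, of "i - 1"] x i by auto
  have p2: "\<phi> (i - 2) = x" using h2 bbc_at[OF ph, of "i - 1"] i i2 p1 by (auto simp: diff_diff_add numeral_2_eq_2)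
  have i3: "i \<ge> 3" using p2 perm_zero_iff[OF ph, of "i - 2"] x i2 by auto
  have T: "map \<phi> [1..<Suc n] = map \<phi> [1..<i-2] @ [x, y, Suc x] @ map \<phi> [i+1..<Suc n]"
    using map_split3[OF i3, of n \<phi>] i p1 p2 by auto
  have S: "[1..<x] @ [x, Suc x] @ [Suc (Suc x)..<y] @ [y] @ [Suc y..<Suc n] = [1..<Suc n]"
    using x by (simp del: upt_Suc add: upt_rules)
  have rS: "map ?r ([1..<x] @ [x] @ [Suc (Suc x)..<y] @ [Suc x, y] @ [Suc y..<Suc n]) = [1..<Suc n]"
  proof -
    obtain y' where y': "y = Suc y'" using x by (cases y) auto
    have "map ?r [1..<x] = [1..<x]" by (rule map_fix) (use x in \<open>auto simp: relabel_def\<close>)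
    moreover have "map ?r [Suc y..<Suc n] = [Suc y..<Suc n]" by (rule map_fix) (use x in \<open>auto simp: relabel_def\<close>)
    moreover have "map ?r [Suc (Suc x)..<y] = [Suc x..<y']" unfolding y'
      by (rule map_shift_down) (use x y' in \<open>auto simp: relabel_def\<close>)
    moreover have "?r x = x" "?r (Suc x) = y'" "?r y = y" using x y' by (auto simp: relabel_def)
    ultimately have "map ?r ([1..<x] @ [x] @ [Suc (Suc x)..<y] @ [Suc x, y] @ [Suc y..<Suc n])
       = [1..<x] @ [x] @ [Suc x..<y'] @ [y', y] @ [Suc y..<Suc n]" by simp
    also have "\<dots> = [1..<Suc n]" using x y' by (simp del: upt_Suc add: upt_rules)
    finally show ?thesis .
  qed
  show ?thesis
  proof (rule group.assemble[OF grp S rS _ T[symmetric] tr ph])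
    show "set ([1..<x] @ [x] @ [Suc (Suc x)..<y] @ [Suc x, y] @ [Suc y..<Suc n]) =
          set ([1..<x] @ [x, Suc x] @ [Suc (Suc x)..<y] @ [y] @ [Suc y..<Suc n])" by (simp only: set_append list.set) blast
    show "card {a \<in> {1..n} \<rightarrow>\<^sub>E carrier G. lprod G a ([1..<x] @ [x, Suc x] @ [Suc (Suc x)..<y] @ [y] @ [Suc y..<Suc n]) =
            lprod G a (map \<phi> [1..<i-2] @ [x, y, Suc x] @ map \<phi> [i+1..<Suc n])} =
          card {a \<in> {1..n} \<rightarrow>\<^sub>E carrier G. lprod G a ([1..<x] @ [x] @ [Suc (Suc x)..<y] @ [Suc x, y] @ [Suc y..<Suc n]) =
            lprod G a (map \<phi> [1..<i-2] @ [x, y, Suc x] @ map \<phi> [i+1..<Suc n])}"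
      by (rule group.case_ia[OF grp]) (simp_all only: S T[symmetric] distinct_T[OF ph] set_T[OF ph] distinct_upt, auto)
  qed
qed

lemma main_ib:
  assumes grp: "group G" and ph: "\<phi> permutes {1..n}" and th: "\<theta> permutes {1..n}"
    and x: "x = 0" "Suc 0 < y" "y \<le> n" and cop: "cyclic_op n x y \<phi> \<theta>"
  shows "card {a \<in> {1..n} \<rightarrow>\<^sub>E carrier G. lprod G a [1..<Suc n] = lprod G a (map \<phi> [1..<Suc n])}
       = card {a \<in> {1..n} \<rightarrow>\<^sub>E carrier G. lprod G a [1..<Suc n] = lprod G a (map \<theta> [1..<Suc n])}"
proof -
  let ?r = "relabel x y"
  have hb: "\<forall>t\<in>{0..n}. bbc n \<theta> (?r t) = ?r (bbc n \<phi> t)" and h1: "bbc n \<phi> (Suc 0) = y"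
    and h2: "bbc n \<phi> y = 0"
    using cop x by (auto simp: cyclic_op_def succ_idx_def)
  have r0: "?r 0 = 0" using x by (simp add: relabel_def)
  have tr: "\<forall>i\<in>{1..n}. \<theta> i = ?r (\<phi> i)" by (rule theta_eq[OF th ph r0 hb])
  obtain i where i: "i \<in> {1..n}" "\<phi> i = Suc 0" using perm_surj[OF ph, of "Suc 0"] x by auto
  have p1: "\<phi> (i - 1) = y" using h1 bbc_at[OF ph, of i] i by auto
  have i2: "i \<ge> 2" using p1 perm_zero_iff[OF ph, of "i - 1"] x i by auto
  have p2: "\<phi> (i - 2) = 0" using h2 bbc_at[OF ph, of "i - 1"] i i2 p1 by (auto simp: diff_diff_add numeral_2_eq_2)
  have ie: "i = 2" using p2 perm_zero_iff[OF ph, of "i - 2"] i2 by auto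
  have n2: "Suc (Suc 0) \<le> n" using i ie by auto
  have T: "map \<phi> [1..<Suc n] = [y, Suc 0] @ map \<phi> [Suc (Suc (Suc 0))..<Suc n]"
  proof -
    have "[1..<Suc n] = Suc 0 # Suc (Suc 0) # [Suc (Suc (Suc 0))..<Suc n]" using n2 by (simp add: upt_conv_Cons)
    thus ?thesis using p1 p2 i ie by (simp add: numeral_2_eq_2)
  qed
  have S: "[Suc 0] @ [Suc (Suc 0)..<y] @ [y] @ [Suc y..<Suc n] = [1..<Suc n]"
    using x by (simp del: upt_Suc add: upt_rules)
  have rS: "map ?r ([Suc (Suc 0)..<y] @ [Suc 0, y] @ [Suc y..<Suc n]) = [1..<Suc n]"
  proof -
    obtain y' where y': "y = Suc y'" using x by (cases y) auto
    have "map ?r [Suc y..<Suc n] = [Suc y..<Suc n]" by (rule map_fix) (use x in \<open>auto simp: relabel_def\<close>)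
    moreover have "map ?r [Suc (Suc 0)..<y] = [Suc 0..<y']" unfolding y'
      by (rule map_shift_down) (use x y' in \<open>auto simp: relabel_def\<close>)
    moreover have "?r (Suc 0) = y'" "?r y = y" using x y' by (auto simp: relabel_def)
    ultimately have "map ?r ([Suc (Suc 0)..<y] @ [Suc 0, y] @ [Suc y..<Suc n])
       = [Suc 0..<y'] @ [y', y] @ [Suc y..<Suc n]" by simp
    also have "\<dots> = [1..<Suc n]" using x y' by (simp del: upt_Suc add: upt_rules)
    finally show ?thesis .
  qed
  show ?thesis
  proof (rule group.assemble[OF grp S rS _ T[symmetric] tr ph])
    show "set ([Suc (Suc 0)..<y] @ [Suc 0, y] @ [Suc y..<Suc n]) =
          set ([Suc 0] @ [Suc (Suc 0)..<y] @ [y] @ [Suc y..<Suc n])" by (simp only: set_append list.set) blast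
    show "card {a \<in> {1..n} \<rightarrow>\<^sub>E carrier G. lprod G a ([Suc 0] @ [Suc (Suc 0)..<y] @ [y] @ [Suc y..<Suc n]) =
            lprod G a ([y, Suc 0] @ map \<phi> [Suc (Suc (Suc 0))..<Suc n])} =
          card {a \<in> {1..n} \<rightarrow>\<^sub>E carrier G. lprod G a ([Suc (Suc 0)..<y] @ [Suc 0, y] @ [Suc y..<Suc n]) =
            lprod G a ([y, Suc 0] @ map \<phi> [Suc (Suc (Suc 0))..<Suc n])}"
      by (rule group.case_ib[OF grp]) (simp_all only: S T[symmetric] distinct_T[OF ph] set_T[OF ph] distinct_upt, auto)
  qed
qed

lemma main_iia:
  assumes grp: "group G" and ph: "\<phi> permutes {1..n}" and th: "\<theta> permutes {1..n}"
    and x: "1 \<le> y" "y < x" "x < n" and cop: "cyclic_op n x y \<phi> \<theta>"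
  shows "card {a \<in> {1..n} \<rightarrow>\<^sub>E carrier G. lprod G a [1..<Suc n] = lprod G a (map \<phi> [1..<Suc n])}
       = card {a \<in> {1..n} \<rightarrow>\<^sub>E carrier G. lprod G a [1..<Suc n] = lprod G a (map \<theta> [1..<Suc n])}"
proof -
  let ?r = "relabel x y"
  have hb: "\<forall>t\<in>{0..n}. bbc n \<theta> (?r t) = ?r (bbc n \<phi> t)" and h1: "bbc n \<phi> (Suc x) = y"
    and h2: "bbc n \<phi> y = x"
    using cop x by (auto simp: cyclic_op_def succ_idx_def)
  have r0: "?r 0 = 0" using x by (simp add: relabel_def)
  have tr: "\<forall>i\<in>{1..n}. \<theta> i = ?r (\<phi> i)" by (rule theta_eq[OF th ph r0 hb])
  obtain i where i: "i \<in> {1..n}" "\<phi> i = Suc x" using perm_surj[OF ph, of "Suc x"] x by auto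
  have p1: "\<phi> (i - 1) = y" using h1 bbc_at[OF ph, of i] i by auto
  have i2: "i \<ge> 2" using p1 perm_zero_iff[OF ph, of "i - 1"] x i by auto
  have p2: "\<phi> (i - 2) = x" using h2 bbc_at[OF ph, of "i - 1"] i i2 p1 by (auto simp: diff_diff_add numeral_2_eq_2)
  have i3: "i \<ge> 3" using p2 perm_zero_iff[OF ph, of "i - 2"] x i2 by auto
  have T: "map \<phi> [1..<Suc n] = map \<phi> [1..<i-2] @ [x, y, Suc x] @ map \<phi> [i+1..<Suc n]"
    using map_split3[OF i3, of n \<phi>] i p1 p2 by auto
  have S: "[1..<y] @ [y] @ [Suc y..<x] @ [x, Suc x] @ [Suc (Suc x)..<Suc n] = [1..<Suc n]"
    using x by (simp del: upt_Suc add: upt_rules)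
  have rS: "map ?r ([1..<y] @ [y, x] @ [Suc y..<x] @ [Suc x] @ [Suc (Suc x)..<Suc n]) = [1..<Suc n]"
  proof -
    have "map ?r [1..<y] = [1..<y]" by (rule map_fix) (use x in \<open>auto simp: relabel_def\<close>)
    moreover have "map ?r [Suc (Suc x)..<Suc n] = [Suc (Suc x)..<Suc n]" by (rule map_fix) (use x in \<open>auto simp: relabel_def\<close>)
    moreover have "map ?r [Suc y..<x] = [Suc (Suc y)..<Suc x]"
      by (rule map_shift_up) (use x in \<open>auto simp: relabel_def\<close>)
    moreover have "?r x = Suc y" "?r (Suc x) = Suc x" "?r y = y" using x by (auto simp: relabel_def)
    ultimately have "map ?r ([1..<y] @ [y, x] @ [Suc y..<x] @ [Suc x] @ [Suc (Suc x)..<Suc n])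
       = [1..<y] @ [y, Suc y] @ [Suc (Suc y)..<Suc x] @ [Suc x] @ [Suc (Suc x)..<Suc n]" by simp
    also have "\<dots> = [1..<Suc n]" using x by (simp del: upt_Suc add: upt_rules)
    finally show ?thesis .
  qed
  show ?thesis
  proof (rule group.assemble[OF grp S rS _ T[symmetric] tr ph])
    show "set ([1..<y] @ [y, x] @ [Suc y..<x] @ [Suc x] @ [Suc (Suc x)..<Suc n]) =
          set ([1..<y] @ [y] @ [Suc y..<x] @ [x, Suc x] @ [Suc (Suc x)..<Suc n])" by (simp only: set_append list.set) blast
    show "card {a \<in> {1..n} \<rightarrow>\<^sub>E carrier G. lprod G a ([1..<y] @ [y] @ [Suc y..<x] @ [x, Suc x] @ [Suc (Suc x)..<Suc n]) =
            lprod G a (map \<phi> [1..<i-2] @ [x, y, Suc x] @ map \<phi> [i+1..<Suc n])} =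
          card {a \<in> {1..n} \<rightarrow>\<^sub>E carrier G. lprod G a ([1..<y] @ [y, x] @ [Suc y..<x] @ [Suc x] @ [Suc (Suc x)..<Suc n]) =
            lprod G a (map \<phi> [1..<i-2] @ [x, y, Suc x] @ map \<phi> [i+1..<Suc n])}"
      by (rule group.case_iia[OF grp]) (simp_all only: S T[symmetric] distinct_T[OF ph] set_T[OF ph] distinct_upt, auto)
  qed
qed

lemma main_iib:
  assumes grp: "group G" and ph: "\<phi> permutes {1..n}" and th: "\<theta> permutes {1..n}"
    and x: "1 \<le> y" "y < x" "x = n" and cop: "cyclic_op n x y \<phi> \<theta>"
  shows "card {a \<in> {1..n} \<rightarrow>\<^sub>E carrier G. lprod G a [1..<Suc n] = lprod G a (map \<phi> [1..<Suc n])}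
       = card {a \<in> {1..n} \<rightarrow>\<^sub>E carrier G. lprod G a [1..<Suc n] = lprod G a (map \<theta> [1..<Suc n])}"
proof -
  let ?r = "relabel x y"
  have hb: "\<forall>t\<in>{0..n}. bbc n \<theta> (?r t) = ?r (bbc n \<phi> t)" and h1: "\<phi> n = y"
    and h2: "bbc n \<phi> y = n"
    using cop x by (auto simp: cyclic_op_def succ_idx_def bbc_0)
  have r0: "?r 0 = 0" using x by (simp add: relabel_def)
  have tr: "\<forall>i\<in>{1..n}. \<theta> i = ?r (\<phi> i)" by (rule theta_eq[OF th ph r0 hb])
  have p1: "\<phi> (n - 1) = n" using h2 h1 bbc_at[OF ph, of n] x by auto
  have n2: "n \<ge> 2" using p1 perm_zero_iff[OF ph, of "n - 1"] x by auto
  have T: "map \<phi> [1..<Suc n] = map \<phi> [1..<n-1] @ [n, y]"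
  proof -
    have "[1..<Suc n] = [1..<n-1] @ (n-1) # [Suc (n-1)..<Suc n]" using n2 by (intro upt_split) auto
    moreover have "Suc (n-1) = n" using n2 by auto
    ultimately have "[1..<Suc n] = [1..<n-1] @ [n-1, n]" by simp
    thus ?thesis using p1 h1 by simp
  qed
  have S: "[1..<y] @ [y] @ [Suc y..<n] @ [n] = [1..<Suc n]"
    using x by (simp del: upt_Suc add: upt_rules)
  have rS: "map ?r ([1..<y] @ [y, n] @ [Suc y..<n]) = [1..<Suc n]"
  proof -
    have "map ?r [1..<y] = [1..<y]" by (rule map_fix) (use x in \<open>auto simp: relabel_def\<close>)
    moreover have "map ?r [Suc y..<n] = [Suc (Suc y)..<Suc n]"
      by (rule map_shift_up) (use x in \<open>auto simp: relabel_def\<close>)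
    moreover have "?r n = Suc y" "?r y = y" using x by (auto simp: relabel_def)
    ultimately have "map ?r ([1..<y] @ [y, n] @ [Suc y..<n])
       = [1..<y] @ [y, Suc y] @ [Suc (Suc y)..<Suc n]" by simp
    also have "\<dots> = [1..<Suc n]" using x by (simp del: upt_Suc add: upt_rules)
    finally show ?thesis .
  qed
  show ?thesis
  proof (rule group.assemble[OF grp S rS _ T[symmetric] tr ph])
    show "set ([1..<y] @ [y, n] @ [Suc y..<n]) = set ([1..<y] @ [y] @ [Suc y..<n] @ [n])" by (simp only: set_append list.set) blast
    show "card {a \<in> {1..n} \<rightarrow>\<^sub>E carrier G. lprod G a ([1..<y] @ [y] @ [Suc y..<n] @ [n]) =
            lprod G a (map \<phi> [1..<n-1] @ [n, y])} =
          card {a \<in> {1..n} \<rightarrow>\<^sub>E carrier G. lprod G a ([1..<y] @ [y, n] @ [Suc y..<n]) =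
            lprod G a (map \<phi> [1..<n-1] @ [n, y])}"
      by (rule group.case_iib[OF grp]) (simp_all only: S T[symmetric] distinct_T[OF ph] set_T[OF ph] distinct_upt, auto)
  qed
qed

lemma main_iic:
  assumes grp: "group G" and ph: "\<phi> permutes {1..n}" and th: "\<theta> permutes {1..n}"
    and x: "y = 0" "y < x" "x < n" and cop: "cyclic_op n x y \<phi> \<theta>"
  shows "card {a \<in> {1..n} \<rightarrow>\<^sub>E carrier G. lprod G a [1..<Suc n] = lprod G a (map \<phi> [1..<Suc n])}
       = card {a \<in> {1..n} \<rightarrow>\<^sub>E carrier G. lprod G a [1..<Suc n] = lprod G a (map \<theta> [1..<Suc n])}"
proof -
  let ?r = "relabel x y"
  have hb: "\<forall>t\<in>{0..n}. bbc n \<theta> (?r t) = ?r (bbc n \<phi> t)" and h1: "bbc n \<phi> (Suc x) = 0"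
    and h2: "\<phi> n = x"
    using cop x by (auto simp: cyclic_op_def succ_idx_def bbc_0)
  have r0: "?r 0 = 0" using x by (simp add: relabel_def)
  have tr: "\<forall>i\<in>{1..n}. \<theta> i = ?r (\<phi> i)" by (rule theta_eq[OF th ph r0 hb])
  obtain i where i: "i \<in> {1..n}" "\<phi> i = Suc x" using perm_surj[OF ph, of "Suc x"] x by auto
  have p1: "\<phi> (i - 1) = 0" using h1 bbc_at[OF ph, of i] i by auto
  have i1: "i = 1" using p1 perm_zero_iff[OF ph, of "i - 1"] i by auto
  have T: "map \<phi> [1..<Suc n] = [Suc x] @ map \<phi> [Suc (Suc 0)..<n] @ [x]"
  proof -
    have "[1..<Suc n] = Suc 0 # [Suc (Suc 0)..<n] @ [n]" using x by (simp add: upt_conv_Cons)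
    thus ?thesis using i i1 h2 by simp
  qed
  have S: "[1..<x] @ [x, Suc x] @ [Suc (Suc x)..<Suc n] = [1..<Suc n]"
    using x by (simp del: upt_Suc add: upt_rules)
  have rS: "map ?r ([x] @ [1..<x] @ [Suc x] @ [Suc (Suc x)..<Suc n]) = [1..<Suc n]"
  proof -
    have "map ?r [Suc (Suc x)..<Suc n] = [Suc (Suc x)..<Suc n]" by (rule map_fix) (use x in \<open>auto simp: relabel_def\<close>)
    moreover have "map ?r [Suc 0..<x] = [Suc (Suc 0)..<Suc x]"
      by (rule map_shift_up) (use x in \<open>auto simp: relabel_def\<close>)
    moreover have "?r x = Suc 0" "?r (Suc x) = Suc x" using x by (auto simp: relabel_def)
    ultimately have "map ?r ([x] @ [1..<x] @ [Suc x] @ [Suc (Suc x)..<Suc n])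
       = [Suc 0] @ [Suc (Suc 0)..<Suc x] @ [Suc x] @ [Suc (Suc x)..<Suc n]" by simp
    also have "\<dots> = [1..<Suc n]" using x by (simp del: upt_Suc add: upt_rules)
    finally show ?thesis .
  qed
  show ?thesis
  proof (rule group.assemble[OF grp S rS _ T[symmetric] tr ph])
    show "set ([x] @ [1..<x] @ [Suc x] @ [Suc (Suc x)..<Suc n]) = set ([1..<x] @ [x, Suc x] @ [Suc (Suc x)..<Suc n])" by (simp only: set_append list.set) blast
    show "card {a \<in> {1..n} \<rightarrow>\<^sub>E carrier G. lprod G a ([1..<x] @ [x, Suc x] @ [Suc (Suc x)..<Suc n]) =
            lprod G a ([Suc x] @ map \<phi> [Suc (Suc 0)..<n] @ [x])} =
          card {a \<in> {1..n} \<rightarrow>\<^sub>E carrier G. lprod G a ([x] @ [1..<x] @ [Suc x] @ [Suc (Suc x)..<Suc n]) =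
            lprod G a ([Suc x] @ map \<phi> [Suc (Suc 0)..<n] @ [x])}"
      by (rule group.case_iic[OF grp]) (simp_all only: S T[symmetric] distinct_T[OF ph] set_T[OF ph] distinct_upt, auto)
  qed
qed



lemma word_prod_lprod: "word_prod G n a = lprod G a [1..<Suc n]"
  by (simp add: word_prod_def lprod_def)
lemma word_prod_lprod_map: "word_prod G n (\<lambda>i. a (\<phi> i)) = lprod G a (map \<phi> [1..<Suc n])"
  by (simp add: word_prod_lprod lprod_map comp_def)

theorem mainTheorem2:
  fixes G :: "('g, 'b) monoid_scheme" and n x y :: nat and phi theta :: "nat \<Rightarrow> nat"
  assumes "group G" and "finite (carrier G)" and "n \<ge> 1"
    and "phi permutes {1..n}" and "theta permutes {1..n}"
    and "x \<le> n" and "y \<le> n"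
    and "cyclic_op n x y phi theta"
  shows "word_prob G n phi = word_prob G n theta"
proof -
  have c: "card {a \<in> {1..n} \<rightarrow>\<^sub>E carrier G. lprod G a [1..<Suc n] = lprod G a (map phi [1..<Suc n])}
       = card {a \<in> {1..n} \<rightarrow>\<^sub>E carrier G. lprod G a [1..<Suc n] = lprod G a (map theta [1..<Suc n])}"
  proof -
    from assms(8) have cases: "(x < n \<and> x + 1 < y) \<or> y < x" by (simp add: cyclic_op_def)
    show ?thesis
    proof (cases "y < x")
      case False
      hence xy: "x < n" "Suc x < y" using cases by auto
      show ?thesis
      proof (cases "x = 0")
        case True thus ?thesis using main_ib[OF assms(1,4,5) True _ assms(7,8)] xy by auto
      next
        case False thus ?thesis using main_ia[OF assms(1,4,5) _ xy(2) assms(7,8)] by auto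
      qed
    next
      case yx: True
      show ?thesis
      proof (cases "x = n")
        case True
        have "y \<noteq> 0"
        proof
          assume "y = 0"
          hence "phi n = 0" using assms(8) True by (simp add: cyclic_op_def succ_idx_def bbc_0)
          thus False using perm_zero_iff[OF assms(4), of n] assms(3) by simp
        qed
        thus ?thesis using main_iib[OF assms(1,4,5) _ yx True assms(8)] by auto
      next
        case False
        hence xn: "x < n" using assms(6) by auto
        show ?thesis
        proof (cases "y = 0")
          case True thus ?thesis using main_iic[OF assms(1,4,5) True yx xn assms(8)] by auto
        next
          case False thus ?thesis using main_iia[OF assms(1,4,5) _ yx xn assms(8)] by auto
        qed
      qed
    qed
  qed
  show ?thesis unfolding word_prob_def word_prod_lprod_map
    by (simp only: word_prod_lprod c)
qed


end
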